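(* Let $G$ be a graph with at most $n$ nodes, let $v$ be any node of $G$ and let $T$ be any trail. Then it can be verified, using only $\mathcal{V}^{2n-1}(v)$, whether $T$ is feasible from $v$ in $G$.
   Context: $G$ is a finite connected undirected graph with unlabeled nodes, where at each node of degree $d$ the incident edges have distinct port numbers $0,\dots,d-1$. Truncated views: $\mathcal{V}^0(v)$ is a single node; $\mathcal{V}^{l+1}(v)$ is the port-labeled rooted tree whose root has, for each neighbor $v_i$ of $v$, a child joined by an edge carrying the port number of $\{v,v_i\}$ at $v$ (root side) and at $v_i$ (child side), this child being the root of a copy of $\mathcal{V}^l(v_i)$. A trail is any finite sequence of non-negative integers. For a walk (not necessarily simple path) $R=(\{v_1,v_2\},\dots,\{v_{j-1},v_j\})$ in $G$, its trail is $(p_1,\dots,p_{2j-2})$ where $p_{2i-1}$ and $p_{2i}$ are the port numbers of $\{v_i,v_{i+1}\}$ at $v_i$ and at $v_{i+1}$. A trail $T$ is feasible from $v$ if there exists such a walk $R$ starting at $v_1=v$ whose trail equals $T$. *)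

theory Defs
  imports Main
begin

text \<open>A port-labeled graph: vertex set V, undirected edge set E (2-element sets),
  and port function P, where P v u is the port number of edge {v,u} at v.\<close>

definition nbrs :: "'a set set \<Rightarrow> 'a \<Rightarrow> 'a set" where
  "nbrs E v = {u. {v, u} \<in> E}"

definition port_graph :: "'a set \<Rightarrow> 'a set set \<Rightarrow> ('a \<Rightarrow> 'a \<Rightarrow> nat) \<Rightarrow> bool" where
  "port_graph V E P \<longleftrightarrow>
     finite V \<and>
     (\<forall>e\<in>E. \<exists>u w. e = {u, w} \<and> u \<in> V \<and> w \<in> V \<and> u \<noteq> w) \<and>
     (\<forall>u\<in>V. \<forall>w\<in>V. (u, w) \<in> {(x, y). {x, y} \<in> E}\<^sup>*) \<and>
     (\<forall>v\<in>V. bij_betw (P v) (nbrs E v) {0..<card (nbrs E v)})"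

definition deg :: "'a set set \<Rightarrow> 'a \<Rightarrow> nat" where
  "deg E v = card (nbrs E v)"

definition nb :: "'a set set \<Rightarrow> ('a \<Rightarrow> 'a \<Rightarrow> nat) \<Rightarrow> 'a \<Rightarrow> nat \<Rightarrow> 'a" where
  "nb E P v i = (THE u. u \<in> nbrs E v \<and> P v u = i)"

text \<open>Children of a node are listed in order of
  their root-side port number (these are distinct and equal 0..d-1 in a view);
  each entry stores the child-side port and the subtree.\<close>
datatype ptree = PNode "(nat \<times> ptree) list"

fun view :: "'a set set \<Rightarrow> ('a \<Rightarrow> 'a \<Rightarrow> nat) \<Rightarrow> nat \<Rightarrow> 'a \<Rightarrow> ptree" where
  "view E P 0 v = PNode []"
| "view E P (Suc l) v =
     PNode (map (\<lambda>i. (P (nb E P v i) v, view E P l (nb E P v i))) [0..<deg E v])"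

fun is_walk :: "'a set set \<Rightarrow> 'a list \<Rightarrow> bool" where
  "is_walk E [] = False"
| "is_walk E [v] = True"
| "is_walk E (u # w # vs) \<longleftrightarrow> {u, w} \<in> E \<and> is_walk E (w # vs)"

fun trail_of :: "('a \<Rightarrow> 'a \<Rightarrow> nat) \<Rightarrow> 'a list \<Rightarrow> nat list" where
  "trail_of P [] = []"
| "trail_of P [v] = []"
| "trail_of P (u # w # vs) = P u w # P w u # trail_of P (w # vs)"

definition feasible :: "'a set set \<Rightarrow> ('a \<Rightarrow> 'a \<Rightarrow> nat) \<Rightarrow> nat list \<Rightarrow> 'a \<Rightarrow> bool" where
  "feasible E P T v \<longleftrightarrow> (\<exists>vs. is_walk E vs \<and> hd vs = v \<and> trail_of P vs = T)"

end

theory Submission imports Defs begin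

lemma nb_props:
  assumes "port_graph V E P" "x \<in> V" "i < deg E x"
  shows "nb E P x i \<in> nbrs E x \<and> P x (nb E P x i) = i"
proof -
  have b: "bij_betw (P x) (nbrs E x) {0..<card (nbrs E x)}"
    using assms(1,2) unfolding port_graph_def by blast
  then obtain u where u: "u \<in> nbrs E x" "P x u = i"
    using assms(3) unfolding deg_def bij_betw_def by (metis atLeastLessThan_iff imageE zero_le)
  have hw: "\<And>w. w \<in> nbrs E x \<and> P x w = i \<Longrightarrow> w = u"
    using b u unfolding bij_betw_def inj_on_def by metis
  have "nb E P x i = u" unfolding nb_def using u hw by (intro the_equality) blast+
  thus ?thesis using u by simp
qed

lemma nb_inv:
  assumes "port_graph V E P" "x \<in> V" "w \<in> nbrs E x"
  shows "P x w < deg E x \<and> nb E P x (P x w) = w"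
proof -
  have b: "bij_betw (P x) (nbrs E x) {0..<card (nbrs E x)}"
    using assms(1,2) unfolding port_graph_def by blast
  have lt: "P x w < deg E x" using b assms(3) unfolding deg_def bij_betw_def by auto
  have "nb E P x (P x w) \<in> nbrs E x \<and> P x (nb E P x (P x w)) = P x w"
    using nb_props[OF assms(1,2) lt] .
  hence "nb E P x (P x w) = w" using b assms(3) unfolding bij_betw_def inj_on_def by metis
  thus ?thesis using lt by simp
qed

lemma nbrs_in:
  assumes "port_graph V E P" "w \<in> nbrs E x"
  shows "w \<in> V"
proof -
  have "{x,w} \<in> E" using assms(2) unfolding nbrs_def by simp
  moreover have "\<forall>e\<in>E. \<exists>u w. e = {u, w} \<and> u \<in> V \<and> w \<in> V \<and> u \<noteq> w"
    using assms(1) unfolding port_graph_def by (elim conjE)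
  ultimately obtain a b where "{x,w} = {a,b}" "a \<in> V" "b \<in> V" by (metis (no_types))
  moreover have "w \<in> {x,w}" by simp
  ultimately show ?thesis by auto
qed

lemma view_Suc_eq:
  "view E P (Suc l) x = view E' P' (Suc l) y \<longleftrightarrow> deg E x = deg E' y \<and>
    (\<forall>i<deg E x. P (nb E P x i) x = P' (nb E' P' y i) y \<and>
       view E P l (nb E P x i) = view E' P' l (nb E' P' y i))"
  by (auto simp: list_eq_iff_nth_eq dest: arg_cong[where f=length])

fun trunc :: "nat \<Rightarrow> ptree \<Rightarrow> ptree" where
  "trunc 0 t = PNode []"
| "trunc (Suc l) (PNode cs) = PNode (map (\<lambda>c. (fst c, trunc l (snd c))) cs)"

lemma trunc_view: "trunc l (view E P (Suc l) x) = view E P l x"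
  by (induction l arbitrary: x) auto

lemma view_mono:
  assumes "view E P (Suc l) x = view E' P' (Suc l) y"
  shows "view E P l x = view E' P' l y"
  by (metis assms trunc_view)

lemma view_le:
  assumes "l \<le> m" "view E P m x = view E' P' m y"
  shows "view E P l x = view E' P' l y"
  using assms
proof (induction m)
  case 0 thus ?case by simp
next
  case (Suc m) thus ?case
    by (metis le_SucE view_mono)
qed

lemma step_gen:
  assumes g1: "port_graph V E P" and g2: "port_graph V2 E2 P2"
    and x: "x \<in> V" and y: "y \<in> V2"
    and eq: "view E P (Suc k) x = view E2 P2 (Suc k) y"
    and H: "\<forall>a\<in>V. \<forall>b\<in>V2. view E P k a = view E2 P2 k b \<longrightarrow> view E P (Suc k) a = view E2 P2 (Suc k) b"
  shows "view E P (Suc (Suc k)) x = view E2 P2 (Suc (Suc k)) y"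
proof -
  have d: "deg E x = deg E2 y" using eq unfolding view_Suc_eq by blast
  have "\<forall>i<deg E x. P (nb E P x i) x = P2 (nb E2 P2 y i) y \<and>
       view E P (Suc k) (nb E P x i) = view E2 P2 (Suc k) (nb E2 P2 y i)"
  proof (intro allI impI)
    fix i assume i: "i < deg E x"
    have a: "nb E P x i \<in> V" using nb_props[OF g1 x i] nbrs_in[OF g1] by blast
    have "i < deg E2 y" using i d by simp
    hence b: "nb E2 P2 y i \<in> V2" using nb_props[OF g2 y] nbrs_in[OF g2] by blast
    have "P (nb E P x i) x = P2 (nb E2 P2 y i) y \<and>
       view E P k (nb E P x i) = view E2 P2 k (nb E2 P2 y i)"
      using eq i unfolding view_Suc_eq by blast
    thus "P (nb E P x i) x = P2 (nb E2 P2 y i) y \<and>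
       view E P (Suc k) (nb E P x i) = view E2 P2 (Suc k) (nb E2 P2 y i)"
      using H a b by blast
  qed
  thus ?thesis using d view_Suc_eq[of E P "Suc k" x E2 P2 y] by blast
qed

lemma walk_transfer:
  assumes g1: "port_graph V E P" and g2: "port_graph V2 E2 P2"
  shows "is_walk E (x # vs) \<Longrightarrow> x \<in> V \<Longrightarrow> y \<in> V2 \<Longrightarrow>
     (\<forall>k. view E P k x = view E2 P2 k y) \<Longrightarrow>
     \<exists>ws. is_walk E2 (y # ws) \<and> trail_of P (x # vs) = trail_of P2 (y # ws)"
proof (induction vs arbitrary: x y)
  case Nil thus ?case by (intro exI[of _ "[]"]) auto
next
  case (Cons w vs)
  have e: "{x, w} \<in> E" and wk: "is_walk E (w # vs)" using Cons.prems(1) by auto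
  have wn: "w \<in> nbrs E x" using e unfolding nbrs_def by simp
  have wV: "w \<in> V" using nbrs_in[OF g1 wn] .
  define i where "i = P x w"
  have i: "i < deg E x" "nb E P x i = w" using nb_inv[OF g1 Cons.prems(2) wn] i_def by auto
  have all: "\<forall>k. view E P (Suc k) x = view E2 P2 (Suc k) y" using Cons.prems(4) by blast
  have a0: "view E P (Suc 0) x = view E2 P2 (Suc 0) y" using all by blast
  have d: "deg E x = deg E2 y" using a0 unfolding view_Suc_eq by blast
  define w2 where "w2 = nb E2 P2 y i"
  have "i < deg E2 y" using i(1) d by simp
  hence w2: "w2 \<in> nbrs E2 y" "P2 y w2 = i" using nb_props[OF g2 Cons.prems(3)] w2_def by auto
  have w2V: "w2 \<in> V2" using nbrs_in[OF g2 w2(1)] .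
  have ik: "P (nb E P x i) x = P2 (nb E2 P2 y i) y \<and> view E P k (nb E P x i) = view E2 P2 k (nb E2 P2 y i)" for k
  proof -
    have "view E P (Suc k) x = view E2 P2 (Suc k) y" using all by blast
    thus ?thesis using i(1) unfolding view_Suc_eq by blast
  qed
  have bk: "P w x = P2 w2 y" using ik[of 0] i(2) w2_def by simp
  have vk: "\<forall>k. view E P k w = view E2 P2 k w2" using ik i(2) w2_def by simp
  obtain ws where ws: "is_walk E2 (w2 # ws)" "trail_of P (w # vs) = trail_of P2 (w2 # ws)"
    using Cons.IH[OF wk wV w2V vk] by blast
  have "{y, w2} \<in> E2" using w2(1) unfolding nbrs_def by simp
  thus ?case using ws bk w2(2) i_def by (intro exI[of _ "w2 # ws"]) auto
qed

definition fv :: "'a set set \<Rightarrow> ('a \<Rightarrow> 'a \<Rightarrow> nat) \<Rightarrow> 'b set set \<Rightarrow> ('b \<Rightarrow> 'b \<Rightarrow> nat) \<Rightarrow> nat \<Rightarrow> 'a + 'b \<Rightarrow> ptree" where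
  "fv E P E' P' k = case_sum (view E P k) (view E' P' k)"

definition stab where
  "stab U E P E' P' k \<longleftrightarrow> (\<forall>x\<in>U. \<forall>y\<in>U. fv E P E' P' k x = fv E P E' P' k y \<longrightarrow> fv E P E' P' (Suc k) x = fv E P E' P' (Suc k) y)"

lemma stab_Suc:
  assumes g1: "port_graph V E P" and g2: "port_graph V' E' P'"
    and s: "stab (V <+> V') E P E' P' k"
  shows "stab (V <+> V') E P E' P' (Suc k)"
proof -
  have H11: "\<forall>a\<in>V. \<forall>b\<in>V. view E P k a = view E P k b \<longrightarrow> view E P (Suc k) a = view E P (Suc k) b"
    proof (intro ballI impI)
    fix a b assume "a \<in> V" "b \<in> V" "view E P k a = view E P k b"
    thus "view E P (Suc k) a = view E P (Suc k) b" using s[unfolded stab_def, rule_format, of "Inl a" "Inl b"] by (auto simp del: view.simps simp: fv_def)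
  qed
  have H12: "\<forall>a\<in>V. \<forall>b\<in>V'. view E P k a = view E' P' k b \<longrightarrow> view E P (Suc k) a = view E' P' (Suc k) b"
    proof (intro ballI impI)
    fix a b assume "a \<in> V" "b \<in> V'" "view E P k a = view E' P' k b"
    thus "view E P (Suc k) a = view E' P' (Suc k) b" using s[unfolded stab_def, rule_format, of "Inl a" "Inr b"] by (auto simp del: view.simps simp: fv_def)
  qed
  have H21: "\<forall>a\<in>V'. \<forall>b\<in>V. view E' P' k a = view E P k b \<longrightarrow> view E' P' (Suc k) a = view E P (Suc k) b"
    proof (intro ballI impI)
    fix a b assume "a \<in> V'" "b \<in> V" "view E' P' k a = view E P k b"
    thus "view E' P' (Suc k) a = view E P (Suc k) b" using s[unfolded stab_def, rule_format, of "Inr a" "Inl b"] by (auto simp del: view.simps simp: fv_def)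
  qed
  have H22: "\<forall>a\<in>V'. \<forall>b\<in>V'. view E' P' k a = view E' P' k b \<longrightarrow> view E' P' (Suc k) a = view E' P' (Suc k) b"
    proof (intro ballI impI)
    fix a b assume "a \<in> V'" "b \<in> V'" "view E' P' k a = view E' P' k b"
    thus "view E' P' (Suc k) a = view E' P' (Suc k) b" using s[unfolded stab_def, rule_format, of "Inr a" "Inr b"] by (auto simp del: view.simps simp: fv_def)
  qed
  show ?thesis unfolding stab_def
  proof (intro ballI impI)
    fix x y assume x: "x \<in> V <+> V'" and y: "y \<in> V <+> V'"
      and eq: "fv E P E' P' (Suc k) x = fv E P E' P' (Suc k) y"
    show "fv E P E' P' (Suc (Suc k)) x = fv E P E' P' (Suc (Suc k)) y"
    proof (cases x)
      case (Inl a)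
      hence a: "a \<in> V" using x by blast
      show ?thesis
      proof (cases y)
        case (Inl b)
        hence "b \<in> V" using y by blast
        thus ?thesis using step_gen[OF g1 g1 a _ _ H11, of b] eq \<open>x = Inl a\<close> Inl
          by (simp del: view.simps add: fv_def)
      next
        case (Inr b)
        hence "b \<in> V'" using y by blast
        thus ?thesis using step_gen[OF g1 g2 a _ _ H12, of b] eq \<open>x = Inl a\<close> Inr
          by (simp del: view.simps add: fv_def)
      qed
    next
      case (Inr a)
      hence a: "a \<in> V'" using x by blast
      show ?thesis
      proof (cases y)
        case (Inl b)
        hence "b \<in> V" using y by blast
        thus ?thesis using step_gen[OF g2 g1 a _ _ H21, of b] eq \<open>x = Inr a\<close> Inl
          by (simp del: view.simps add: fv_def)
      next
        case (Inr b)
        hence "b \<in> V'" using y by blast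
        thus ?thesis using step_gen[OF g2 g2 a _ _ H22, of b] eq \<open>x = Inr a\<close> Inr
          by (simp del: view.simps add: fv_def)
      qed
    qed
  qed
qed

lemma stab_le: "port_graph V E P \<Longrightarrow> port_graph V' E' P' \<Longrightarrow> stab (V <+> V') E P E' P' j \<Longrightarrow> j \<le> k \<Longrightarrow> stab (V <+> V') E P E' P' k"
  by (induction k) (auto simp: le_Suc_eq intro: stab_Suc)

lemma card_mono_stab:
  assumes fin: "finite U"
  shows "card (fv E P E' P' k ` U) \<le> card (fv E P E' P' (Suc k) ` U) \<and>
    (\<not> stab U E P E' P' k \<longrightarrow> card (fv E P E' P' k ` U) < card (fv E P E' P' (Suc k) ` U))"
proof -
  have img: "fv E P E' P' k ` U = trunc k ` (fv E P E' P' (Suc k) ` U)"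
    unfolding image_image by (rule image_cong) (auto simp del: view.simps simp: fv_def trunc_view split: sum.split)
  have le: "card (fv E P E' P' k ` U) \<le> card (fv E P E' P' (Suc k) ` U)"
    unfolding img by (rule card_image_le) (use fin in auto)
  moreover have "\<not> stab U E P E' P' k \<longrightarrow> card (fv E P E' P' k ` U) < card (fv E P E' P' (Suc k) ` U)"
  proof (intro impI, rule ccontr)
    assume ns: "\<not> stab U E P E' P' k" and "\<not> card (fv E P E' P' k ` U) < card (fv E P E' P' (Suc k) ` U)"
    hence "card (trunc k ` (fv E P E' P' (Suc k) ` U)) = card (fv E P E' P' (Suc k) ` U)"
      using le img by simp
    hence inj: "inj_on (trunc k) (fv E P E' P' (Suc k) ` U)"
      using eq_card_imp_inj_on fin by (metis card_image_le finite_imageI le_antisym order_refl)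
    have "stab U E P E' P' k" unfolding stab_def
    proof (intro ballI impI)
      fix x y assume x: "x \<in> U" and y: "y \<in> U" and e: "fv E P E' P' k x = fv E P E' P' k y"
      have t: "\<And>z. trunc k (fv E P E' P' (Suc k) z) = fv E P E' P' k z"
        by (auto simp del: view.simps simp: fv_def trunc_view split: sum.split)
      show "fv E P E' P' (Suc k) x = fv E P E' P' (Suc k) y"
        using inj x y e t unfolding inj_on_def by (metis imageI)
    qed
    thus False using ns by simp
  qed
  ultimately show ?thesis by blast
qed


lemma feas_transfer:
  assumes g1: "port_graph V E P" and g2: "port_graph V2 E2 P2"
    and x: "x \<in> V" and y: "y \<in> V2" and all: "\<forall>k. view E P k x = view E2 P2 k y"
    and f: "feasible E P T x"
  shows "feasible E2 P2 T y"
proof -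
  obtain vs where vs: "is_walk E vs" "hd vs = x" "trail_of P vs = T" using f unfolding feasible_def by blast
  then obtain rest where r: "vs = x # rest" by (cases vs) auto
  obtain ws where "is_walk E2 (y # ws)" "trail_of P (x # rest) = trail_of P2 (y # ws)"
    using walk_transfer[OF g1 g2, of x rest y] vs(1) r x y all by blast
  thus ?thesis unfolding feasible_def using vs r by (intro exI[of _ "y # ws"]) auto
qed

theorem corollary5p3:
  fixes V :: "'a set" and E :: "'a set set" and P :: "'a \<Rightarrow> 'a \<Rightarrow> nat"
    and V' :: "'b set" and E' :: "'b set set" and P' :: "'b \<Rightarrow> 'b \<Rightarrow> nat"
    and n :: nat and v :: 'a and v' :: 'b and T :: "nat list"
  assumes "port_graph V E P" and "port_graph V' E' P'"
    and "card V \<le> n" and "card V' \<le> n"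
    and "v \<in> V" and "v' \<in> V'"
    and "view E P (2 * n - 1) v = view E' P' (2 * n - 1) v'"
  shows "feasible E P T v \<longleftrightarrow> feasible E' P' T v'"
proof -
  note g1 = assms(1) and g2 = assms(2)
  define U where "U = V <+> V'"
  define c where "c k = card (fv E P E' P' k ` U)" for k
  have finV: "finite V" using g1 unfolding port_graph_def by blast
  have finV': "finite V'" using g2 unfolding port_graph_def by blast
  have fin: "finite U" unfolding U_def using finV finV' by simp
  have cardU: "card U \<le> 2 * n" unfolding U_def using finV finV' assms(3,4) by (simp add: card_Plus)
  have n1: "n \<ge> 1" proof -
    have "card V > 0" using finV assms(5) card_gt_0_iff by blast
    thus ?thesis using assms(3) by linarith
  qed
  have cU: "c k \<le> card U" for k unfolding c_def by (rule card_image_le[OF fin])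
  have c0: "c 0 \<ge> 1"
  proof -
    have "Inl v \<in> U" using assms(5) U_def by auto
    hence "fv E P E' P' 0 ` U \<noteq> {}" by blast
    hence "card (fv E P E' P' 0 ` U) > 0" using fin card_gt_0_iff by blast
    thus ?thesis unfolding c_def by simp
  qed
  have grow: "\<not> stab U E P E' P' k \<longrightarrow> k + 2 \<le> c (Suc k)" for k
  proof (induction k)
    case 0 show ?case using card_mono_stab[OF fin, of E P E' P' 0] c0 unfolding c_def by auto
  next
    case (Suc k)
    show ?case
    proof
      assume ns: "\<not> stab U E P E' P' (Suc k)"
      hence "\<not> stab U E P E' P' k" using stab_Suc[OF g1 g2] unfolding U_def by blast
      hence "k + 2 \<le> c (Suc k)" using Suc by blast
      moreover have "c (Suc k) < c (Suc (Suc k))" using card_mono_stab[OF fin, of E P E' P' "Suc k"] ns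
        unfolding c_def by blast
      ultimately show "Suc k + 2 \<le> c (Suc (Suc k))" by simp
    qed
  qed
  define m where "m = 2 * n - 2"
  have Sm: "Suc m = 2 * n - 1" unfolding m_def using n1 by simp
  have eqv: "fv E P E' P' (Suc m) (Inl v) = fv E P E' P' (Suc m) (Inr v')"
    using assms(7) Sm by (simp del: view.simps add: fv_def)
  have sm: "stab U E P E' P' m"
  proof (rule ccontr)
    assume "\<not> stab U E P E' P' m"
    hence "m + 2 \<le> c (Suc m)" using grow by blast
    moreover have "c (Suc m) \<le> card U" using cU .
    ultimately have "c (Suc m) = card U" using cardU n1 unfolding m_def by linarith
    hence "inj_on (fv E P E' P' (Suc m)) U" unfolding c_def using eq_card_imp_inj_on fin by blast
    moreover have "Inl v \<in> U" "Inr v' \<in> U" using assms(5,6) U_def by auto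
    ultimately show False using eqv unfolding inj_on_def by blast
  qed
  have hi: "fv E P E' P' (Suc m + j) (Inl v) = fv E P E' P' (Suc m + j) (Inr v')" for j
  proof (induction j)
    case 0 thus ?case using eqv by (simp del: view.simps)
  next
    case (Suc j)
    have "stab U E P E' P' (Suc m + j)" using stab_le[OF g1 g2, of m] sm unfolding U_def by simp
    moreover have "Inl v \<in> U" "Inr v' \<in> U" using assms(5,6) U_def by auto
    ultimately have "fv E P E' P' (Suc (Suc m + j)) (Inl v) = fv E P E' P' (Suc (Suc m + j)) (Inr v')"
      using Suc unfolding stab_def by blast
    thus ?case by (simp del: view.simps)
  qed
  have all: "\<forall>k. view E P k v = view E' P' k v'"
  proof
    fix k
    show "view E P k v = view E' P' k v'"
    proof (cases "k \<le> Suc m")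
      case True thus ?thesis using view_le[of k "Suc m" E P v E' P' v'] assms(7) Sm by (simp del: view.simps)
    next
      case False
      define j where "j = k - Suc m"
      have "k = Suc m + j" using False j_def by simp
      thus ?thesis using hi[of j] by (simp del: view.simps add: fv_def)
    qed
  qed
  show ?thesis
    using feas_transfer[OF g1 g2 assms(5,6) all] feas_transfer[OF g2 g1 assms(6,5)] all by (auto simp del: view.simps)
qed

end
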